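(* Let $\mathbb{K}$ be a field and $\Delta$ a $d$-dimensional simplicial complex on vertex set $[n]$ such that $\tilde H_d(\Delta;\mathbb{K})\ne0$. Set $R=\mathbb{K}[x_1,\dots,x_n]$, $L=x_1+\dots+x_n$ and $J=I_\Delta+(x_1^{d+2},\dots,x_n^{d+2})$. Then the multiplication map $$\times L:\Big(\frac{R}{J}\Big)_{\binom{d+2}{2}-1}\to\Big(\frac{R}{J}\Big)_{\binom{d+2}{2}}$$ is not surjective.
   Context: $I_\Delta=(\prod_{i\in\tau}x_i:\tau\subseteq[n],\tau\notin\Delta)$ is the Stanley–Reisner ideal of $\Delta$. *)

theory Defs
  imports Main "HOL-Library.Poly_Mapping"
begin

type_synonym 'k mpoly = "(nat \<Rightarrow>\<^sub>0 nat) \<Rightarrow>\<^sub>0 'k"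

definition var :: "nat \<Rightarrow> 'k::comm_ring_1 mpoly" where
  "var i = Poly_Mapping.single (Poly_Mapping.single i 1) 1"

definition mdeg :: "(nat \<Rightarrow>\<^sub>0 nat) \<Rightarrow> nat" where
  "mdeg a = (\<Sum>i\<in>Poly_Mapping.keys a. Poly_Mapping.lookup a i)"

definition polyring :: "nat \<Rightarrow> 'k::comm_ring_1 mpoly set" where
  "polyring n = {f. \<forall>a\<in>Poly_Mapping.keys f. Poly_Mapping.keys a \<subseteq> {1..n}}"

definition homogeneous :: "nat \<Rightarrow> 'k::comm_ring_1 mpoly \<Rightarrow> bool" where
  "homogeneous m f \<longleftrightarrow> (\<forall>a\<in>Poly_Mapping.keys f. mdeg a = m)"

definition ideal_gen :: "nat \<Rightarrow> 'k::comm_ring_1 mpoly set \<Rightarrow> 'k mpoly set" where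
  "ideal_gen n S = {(\<Sum>i<k. r i * s i) | (k::nat) r s. \<forall>i<k. r i \<in> polyring n \<and> s i \<in> S}"

definition simplicial_complex :: "nat \<Rightarrow> nat set set \<Rightarrow> bool" where
  "simplicial_complex n \<Delta> \<longleftrightarrow> \<Delta> \<noteq> {} \<and> (\<forall>\<sigma>\<in>\<Delta>. \<sigma> \<subseteq> {1..n}) \<and>
     (\<forall>\<sigma>\<in>\<Delta>. \<forall>\<tau>. \<tau> \<subseteq> \<sigma> \<longrightarrow> \<tau> \<in> \<Delta>)"

definition complex_dim :: "nat set set \<Rightarrow> nat \<Rightarrow> bool" where
  "complex_dim \<Delta> d \<longleftrightarrow> (\<exists>\<sigma>\<in>\<Delta>. card \<sigma> = d + 1) \<and> (\<forall>\<sigma>\<in>\<Delta>. card \<sigma> \<le> d + 1)"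

definition SR_ideal :: "nat \<Rightarrow> nat set set \<Rightarrow> 'k::comm_ring_1 mpoly set" where
  "SR_ideal n \<Delta> = ideal_gen n {(\<Prod>i\<in>\<tau>. var i) | \<tau>. \<tau> \<subseteq> {1..n} \<and> \<tau> \<notin> \<Delta>}"

text \<open>A k-chain: a K-valued function on faces with k+1 vertices (vertices ordered increasingly).
  For k = 0 the boundary goes to the (-1)-chains supported on the empty face,
  so the resulting homology is the reduced homology.\<close>
definition is_chain :: "nat set set \<Rightarrow> nat \<Rightarrow> (nat set \<Rightarrow> 'k::field) \<Rightarrow> bool" where
  "is_chain \<Delta> k c \<longleftrightarrow> (\<forall>\<sigma>. c \<sigma> \<noteq> 0 \<longrightarrow> \<sigma> \<in> \<Delta> \<and> card \<sigma> = k + 1)"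

definition boundary :: "nat \<Rightarrow> nat set set \<Rightarrow> (nat set \<Rightarrow> 'k::field) \<Rightarrow> nat set \<Rightarrow> 'k" where
  "boundary n \<Delta> c \<tau> = (\<Sum>v\<in>{1..n} - \<tau>.
      if insert v \<tau> \<in> \<Delta> then (-1) ^ card {u\<in>\<tau>. u < v} * c (insert v \<tau>) else 0)"

definition reduced_homology_nonzero :: "'k::field itself \<Rightarrow> nat \<Rightarrow> nat set set \<Rightarrow> nat \<Rightarrow> bool" where
  "reduced_homology_nonzero _ n \<Delta> k \<longleftrightarrow>
     (\<exists>z :: nat set \<Rightarrow> 'k. is_chain \<Delta> k z \<and> (\<forall>\<tau>. boundary n \<Delta> z \<tau> = 0) \<and>
        \<not> (\<exists>b :: nat set \<Rightarrow> 'k. is_chain \<Delta> (k + 1) b \<and> (\<forall>\<tau>. z \<tau> = boundary n \<Delta> b \<tau>)))"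

end

theory Submission
  imports Defs
begin


definition invs :: "nat set \<Rightarrow> (nat \<Rightarrow> nat) \<Rightarrow> (nat \<times> nat) set" where
  "invs K f = {(u,v). u \<in> K \<and> v \<in> K \<and> u < v \<and> f v < f u}"

definition sg :: "(nat \<Rightarrow>\<^sub>0 nat) \<Rightarrow> 'k::field" where
  "sg a = (-1) ^ card (invs (Poly_Mapping.keys a) (Poly_Mapping.lookup a))"

definition good :: "nat \<Rightarrow> (nat \<Rightarrow>\<^sub>0 nat) \<Rightarrow> bool" where
  "good d a \<longleftrightarrow> inj_on (Poly_Mapping.lookup a) (Poly_Mapping.keys a) \<and> (\<forall>i. Poly_Mapping.lookup a i \<le> d + 1)"

definition wt :: "(nat set \<Rightarrow> 'k::field) \<Rightarrow> nat \<Rightarrow> (nat \<Rightarrow>\<^sub>0 nat) \<Rightarrow> 'k" where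
  "wt z d a = (if good d a then z (Poly_Mapping.keys a) * sg a else 0)"

definition phi :: "(nat set \<Rightarrow> 'k::field) \<Rightarrow> nat \<Rightarrow> 'k mpoly \<Rightarrow> 'k" where
  "phi z d h = (\<Sum>a\<in>Poly_Mapping.keys h. Poly_Mapping.lookup h a * wt z d a)"

lemma phi_superset:
  assumes "finite S" "Poly_Mapping.keys h \<subseteq> S"
  shows "phi z d h = (\<Sum>a\<in>S. Poly_Mapping.lookup h a * wt z d a)"
  unfolding phi_def using assms
  by (intro sum.mono_neutral_left) (auto simp: in_keys_iff)

lemma phi_add: "phi z d (f + g) = phi z d f + phi z d g"
proof -
  let ?S = "Poly_Mapping.keys f \<union> Poly_Mapping.keys g"
  have "phi z d (f + g) = (\<Sum>a\<in>?S. Poly_Mapping.lookup (f+g) a * wt z d a)"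
    using keys_add[of f g] by (intro phi_superset) auto
  also have "\<dots> = (\<Sum>a\<in>?S. Poly_Mapping.lookup f a * wt z d a) + (\<Sum>a\<in>?S. Poly_Mapping.lookup g a * wt z d a)"
    by (simp add: lookup_add distrib_right sum.distrib)
  also have "\<dots> = phi z d f + phi z d g"
    by (subst (1 2) phi_superset[where S="?S"]) auto
  finally show ?thesis .
qed

lemma phi_uminus: "phi z d (- f) = - phi z d f"
  unfolding phi_def by (simp add: sum_negf)

lemma phi_diff: "phi z d (f - g) = phi z d f - phi z d g"
  using phi_add[of z d f "-g"] phi_uminus[of z d g] by simp

lemma phi_zero: "phi z d 0 = 0"
  unfolding phi_def by simp

lemma phi_sum: "phi z d (\<Sum>x\<in>A. h x) = (\<Sum>x\<in>A. phi z d (h x))"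
  by (induction A rule: infinite_finite_induct) (auto simp: phi_zero phi_add)

lemma phi_single: "phi z d (Poly_Mapping.single a c) = c * wt z d a"
  unfolding phi_def by simp

lemma poly_expand: "g = (\<Sum>b\<in>Poly_Mapping.keys g. Poly_Mapping.single b (Poly_Mapping.lookup g b))"
  by (rule poly_mapping_eqI) (simp add: lookup_sum lookup_single when_def in_keys_iff)

definition bad :: "nat set set \<Rightarrow> nat \<Rightarrow> (nat \<Rightarrow>\<^sub>0 nat) \<Rightarrow> bool" where
  "bad \<Delta> d a \<longleftrightarrow> Poly_Mapping.keys a \<notin> \<Delta> \<or> (\<exists>i. d + 2 \<le> Poly_Mapping.lookup a i)"

definition allbad :: "nat set set \<Rightarrow> nat \<Rightarrow> 'k::comm_ring_1 mpoly \<Rightarrow> bool" where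
  "allbad \<Delta> d h \<longleftrightarrow> (\<forall>a\<in>Poly_Mapping.keys h. bad \<Delta> d a)"

lemma chain_nz: "is_chain \<Delta> d z \<Longrightarrow> z \<sigma> \<noteq> 0 \<Longrightarrow> \<sigma> \<in> \<Delta> \<and> card \<sigma> = d + 1"
  unfolding is_chain_def by blast

lemma wt_bad: "is_chain \<Delta> d z \<Longrightarrow> bad \<Delta> d a \<Longrightarrow> wt z d a = 0"
proof -
  assume c: "is_chain \<Delta> d z" and b: "bad \<Delta> d a"
  show ?thesis
  proof (cases "Poly_Mapping.keys a \<in> \<Delta>")
    case True
    then obtain i where "d + 2 \<le> Poly_Mapping.lookup a i" using b unfolding bad_def by blast
    then have "\<not> Poly_Mapping.lookup a i \<le> d + 1" by simp
    then have "\<not> good d a" unfolding good_def by blast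
    then show ?thesis unfolding wt_def by simp
  next
    case False
    then have "z (Poly_Mapping.keys a) = 0" using chain_nz[OF c] by blast
    then show ?thesis unfolding wt_def by simp
  qed
qed

lemma phi_allbad: "is_chain \<Delta> d z \<Longrightarrow> allbad \<Delta> d h \<Longrightarrow> phi z d h = 0"
  unfolding phi_def allbad_def by (simp add: wt_bad)

lemma keys_add_nat: "Poly_Mapping.keys (a + b) = Poly_Mapping.keys a \<union> Poly_Mapping.keys (b :: nat \<Rightarrow>\<^sub>0 nat)"
  by (auto simp: in_keys_iff lookup_add)

lemma bad_mono:
  assumes "simplicial_complex n \<Delta>" "bad \<Delta> d b"
  shows "bad \<Delta> d (a + b)"
proof -
  have "Poly_Mapping.keys (a + b) \<in> \<Delta> \<Longrightarrow> Poly_Mapping.keys b \<in> \<Delta>"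
    using assms(1) unfolding simplicial_complex_def keys_add_nat by blast
  then show ?thesis using assms(2) unfolding bad_def
    by (auto simp: lookup_add intro: le_trans[OF _ le_add2])
qed

lemma allbad_mult:
  assumes "simplicial_complex n \<Delta>" "allbad \<Delta> d s"
  shows "allbad \<Delta> d (r * s)"
  unfolding allbad_def
proof
  fix x assume "x \<in> Poly_Mapping.keys (r * s)"
  then obtain a b where "x = a + b" "b \<in> Poly_Mapping.keys s"
    using keys_mult[of r s] by blast
  then show "bad \<Delta> d x" using assms bad_mono unfolding allbad_def by blast
qed

lemma allbad_add: "allbad \<Delta> d f \<Longrightarrow> allbad \<Delta> d g \<Longrightarrow> allbad \<Delta> d (f + g)"
  unfolding allbad_def using keys_add[of f g] by blast

lemma allbad_sum: "(\<And>x. x \<in> A \<Longrightarrow> allbad \<Delta> d (h x)) \<Longrightarrow> allbad \<Delta> d (\<Sum>x\<in>A. h x)"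
proof (induction A rule: infinite_finite_induct)
  case (insert x F)
  then show ?case by (simp add: allbad_add)
qed (auto simp: allbad_def)

lemma allbad_ideal:
  assumes "simplicial_complex n \<Delta>" "\<And>s. s \<in> S \<Longrightarrow> allbad \<Delta> d s" "h \<in> ideal_gen n S"
  shows "allbad \<Delta> d h"
proof -
  obtain k :: nat and r s where h: "h = (\<Sum>i<k. r i * s i)" and rs: "\<forall>i<k. r i \<in> polyring n \<and> s i \<in> S"
    using assms(3) unfolding ideal_gen_def by fastforce
  show ?thesis unfolding h
  proof (rule allbad_sum)
    fix i assume "i \<in> {..<k}"
    then have "s i \<in> S" using rs by blast
    then show "allbad \<Delta> d (r i * s i)" by (intro allbad_mult[OF assms(1)] assms(2))
  qed
qed

lemma prod_var: "finite \<tau> \<Longrightarrow> (\<Prod>i\<in>\<tau>. var i) = (Poly_Mapping.single (\<Sum>i\<in>\<tau>. Poly_Mapping.single i 1) 1 :: 'k::comm_ring_1 mpoly)"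
  by (induction \<tau> rule: finite_induct) (auto simp: var_def mult_single)

lemma keys_sum_single: "finite \<tau> \<Longrightarrow> Poly_Mapping.keys (\<Sum>i\<in>\<tau>. Poly_Mapping.single i (1::nat)) = \<tau>"
  by (auto simp: in_keys_iff lookup_sum lookup_single when_def split: if_splits)

lemma var_pow: "(var i ^ k :: 'k::comm_ring_1 mpoly) = Poly_Mapping.single (Poly_Mapping.single i k) 1"
proof (induction k)
  case 0
  then show ?case by (simp add: one_poly_mapping_def)
next
  case (Suc k)
  have e: "Poly_Mapping.single i 1 + Poly_Mapping.single i k = Poly_Mapping.single i (Suc k)"
    by (metis single_add plus_1_eq_Suc)
  have "(var i ^ Suc k :: 'k mpoly) = var i * var i ^ k" by simp
  also have "\<dots> = var i * Poly_Mapping.single (Poly_Mapping.single i k) 1"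
    by (simp only: Suc.IH)
  also have "\<dots> = Poly_Mapping.single (Poly_Mapping.single i 1 + Poly_Mapping.single i k) 1"
    unfolding var_def mult_single by simp
  finally show ?case unfolding e .
qed

lemma allbad_J:
  assumes "simplicial_complex n \<Delta>" "h \<in> ideal_gen n (SR_ideal n \<Delta> \<union> {var i ^ (d + 2) | i. i \<in> {1..n}})"
  shows "allbad \<Delta> d (h :: 'k::comm_ring_1 mpoly)"
proof (rule allbad_ideal[OF assms(1) _ assms(2)])
  fix s :: "'k mpoly" assume "s \<in> SR_ideal n \<Delta> \<union> {var i ^ (d + 2) | i. i \<in> {1..n}}"
  then show "allbad \<Delta> d s"
  proof
    assume "s \<in> SR_ideal n \<Delta>"
    show ?thesis
    proof (rule allbad_ideal[OF assms(1) _ \<open>s \<in> SR_ideal n \<Delta>\<close>[unfolded SR_ideal_def]])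
      fix t :: "'k mpoly" assume "t \<in> {\<Prod>i\<in>\<tau>. var i |\<tau>. \<tau> \<subseteq> {1..n} \<and> \<tau> \<notin> \<Delta>}"
      then obtain \<tau> where "t = (\<Prod>i\<in>\<tau>. var i)" "\<tau> \<subseteq> {1..n}" "\<tau> \<notin> \<Delta>" by blast
      moreover have "finite \<tau>" using \<open>\<tau> \<subseteq> {1..n}\<close> finite_subset by blast
      moreover have k: "Poly_Mapping.keys (\<Sum>i\<in>\<tau>. Poly_Mapping.single i (1::nat)) = \<tau>"
        using keys_sum_single \<open>finite \<tau>\<close> by blast
      ultimately show "allbad \<Delta> d t"
        by (simp add: prod_var allbad_def bad_def k k[simplified])
    qed
  next
    assume "s \<in> {var i ^ (d + 2) | i. i \<in> {1..n}}"
    then obtain i where "s = var i ^ (d + 2)" by blast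
    then have "s = Poly_Mapping.single (Poly_Mapping.single i (d + 2)) 1" by (metis var_pow)
    then show ?thesis unfolding allbad_def bad_def
      by (intro ballI disjI2 exI[of _ i]) simp
  qed
qed



lemma swap_lemma:
  fixes f1 f2 :: "nat \<Rightarrow> nat"
  assumes fin: "finite K" and inj: "inj_on f1 K" and ij: "i \<in> K" "j \<in> K" "i \<noteq> j"
    and f1i: "f1 i = Suc c" and f1j: "f1 j = c" and f2i: "f2 i = c" and f2j: "f2 j = Suc c"
    and oth: "\<And>x. x \<noteq> i \<Longrightarrow> x \<noteq> j \<Longrightarrow> f2 x = f1 x"
  shows "inj_on f2 K" "((-1::'k::field) ^ card (invs K f2)) = - ((-1) ^ card (invs K f1))"
proof -
  have ne: "f1 x \<noteq> c \<and> f1 x \<noteq> Suc c" if "x \<in> K" "x \<noteq> i" "x \<noteq> j" for x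
    using inj ij f1i f1j that by (metis inj_onD)
  show "inj_on f2 K"
  proof (rule inj_onI)
    fix x y assume xy: "x \<in> K" "y \<in> K" "f2 x = f2 y"
    show "x = y"
    proof (cases "x = i \<or> x = j")
      case True
      then show ?thesis
      proof (cases "y = i \<or> y = j")
        case True
        then show ?thesis using \<open>x = i \<or> x = j\<close> xy f2i f2j by auto
      next
        case False
        then show ?thesis using \<open>x = i \<or> x = j\<close> xy f2i f2j oth[of y] ne[of y] by auto
      qed
    next
      case False
      then show ?thesis
      proof (cases "y = i \<or> y = j")
        case True
        then show ?thesis using False xy f2i f2j oth[of x] ne[of x] by auto
      next
        case False
        then show ?thesis using \<open>\<not> (x = i \<or> x = j)\<close> xy oth[of x] oth[of y] inj_onD[OF inj] by auto
      qed
    qed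
  qed
  define p where "p = min i j"
  define q where "q = max i j"
  have pq: "p < q" "p \<in> K" "q \<in> K" "{p, q} = {i, j}"
    using ij unfolding p_def q_def by (auto simp: min_def max_def)
  have key: "f2 v < f2 u \<longleftrightarrow> f1 v < f1 u"
    if "u \<in> K" "v \<in> K" "u < v" "(u, v) \<noteq> (p, q)" for u v
  proof -
    have nuv: "\<not> ({u, v} = {i, j})"
    proof
      assume "{u, v} = {i, j}"
      then have "{u, v} = {p, q}" using pq by simp
      then show False using that pq by (auto simp: doubleton_eq_iff)
    qed
    show ?thesis
    proof (cases "u = i \<or> u = j")
      case True
      then have "v \<noteq> i" "v \<noteq> j" using nuv that by auto
      then show ?thesis using True ne[of v] that oth[of v] f1i f1j f2i f2j by auto
    next
      case False
      show ?thesis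
      proof (cases "v = i \<or> v = j")
        case True
        then show ?thesis using False ne[of u] that oth[of u] f1i f1j f2i f2j by auto
      next
        case False2: False
        then show ?thesis using False oth[of u] oth[of v] by auto
      qed
    qed
  qed
  have eq: "invs K f1 - {(p, q)} = invs K f2 - {(p, q)}"
    unfolding invs_def using key by auto
  have xor: "(p, q) \<in> invs K f1 \<longleftrightarrow> (p, q) \<notin> invs K f2"
    unfolding invs_def p_def q_def using ij f1i f1j f2i f2j by (auto simp: min_def max_def)
  have finv: "finite (invs K f)" for f
    by (rule finite_subset[of _ "K \<times> K"]) (auto simp: invs_def fin)
  show "((-1::'k::field) ^ card (invs K f2)) = - ((-1) ^ card (invs K f1))"
  proof (cases "(p, q) \<in> invs K f1")
    case True
    then have "invs K f2 = invs K f1 - {(p, q)}" using eq xor by auto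
    then have "card (invs K f1) = Suc (card (invs K f2))"
      using True finv card_Suc_Diff1 by metis
    then show ?thesis by simp
  next
    case False
    then have "(p, q) \<in> invs K f2" using xor by auto
    moreover have "invs K f1 = invs K f2 - {(p, q)}" using eq False by auto
    ultimately have "card (invs K f2) = Suc (card (invs K f1))"
      using finv card_Suc_Diff1 by metis
    then show ?thesis by simp
  qed
qed

lemma lookup_e: "Poly_Mapping.lookup (Poly_Mapping.single (i::nat) (1::nat) + b) x =
   (if x = i then Suc (Poly_Mapping.lookup b x) else Poly_Mapping.lookup b x)"
  by (simp add: lookup_add lookup_single when_def)

lemma keys_e: "Poly_Mapping.keys (Poly_Mapping.single (i::nat) (1::nat) + b) = insert i (Poly_Mapping.keys b)"
  unfolding keys_add_nat by simp



lemma part1: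
  fixes b :: "nat \<Rightarrow>\<^sub>0 nat" and z :: "nat set \<Rightarrow> 'k::field"
  assumes chain: "is_chain \<Delta> d z"
  shows "(\<Sum>i\<in>Poly_Mapping.keys b. wt z d (Poly_Mapping.single i 1 + b)) = 0"
proof (cases "\<forall>i\<in>Poly_Mapping.keys b. wt z d (Poly_Mapping.single i 1 + b) = 0")
  case True
  then show ?thesis by simp
next
  case False
  then obtain i where i: "i \<in> Poly_Mapping.keys b" "wt z d (Poly_Mapping.single i 1 + b) \<noteq> 0"
    by blast
  define K where "K = Poly_Mapping.keys b"
  have finK: "finite K" unfolding K_def by simp
  define f1 where "f1 = Poly_Mapping.lookup (Poly_Mapping.single i 1 + b)"
  have kK: "Poly_Mapping.keys (Poly_Mapping.single i 1 + b) = K"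
    using i(1) unfolding keys_e K_def by blast
  have good1: "good d (Poly_Mapping.single i 1 + b)" and zK: "z K \<noteq> 0"
    using i(2) kK unfolding wt_def by (auto split: if_splits)
  have cardK: "card K = d + 1" using chain_nz[OF chain zK] by blast
  have inj1: "inj_on f1 K" and bnd1: "\<And>x. f1 x \<le> d + 1"
    using good1 kK unfolding good_def f1_def by auto
  have f1pos: "f1 x \<noteq> 0" if "x \<in> K" for x
    using that kK unfolding f1_def by (metis in_keys_iff)
  have img: "f1 ` K = {1..d+1}"
  proof (rule card_seteq)
    show "finite {1..d+1}" by simp
    show "f1 ` K \<subseteq> {1..d+1}" using f1pos bnd1 by (auto simp: Suc_le_eq)
    show "card {1..d+1} \<le> card (f1 ` K)" using card_image[OF inj1] cardK by simp
  qed
  define c where "c = Poly_Mapping.lookup b i"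
  have c1: "c \<ge> 1" using i(1) unfolding c_def by (simp add: in_keys_iff Suc_le_eq)
  have f1i: "f1 i = Suc c" unfolding f1_def c_def lookup_e by simp
  have "c \<in> {1..d+1}" using c1 bnd1[of i] f1i by simp
  then obtain j where j: "j \<in> K" "f1 j = c" using img by (metis imageE)
  have ji: "j \<noteq> i" using j f1i by auto
  have bj: "Poly_Mapping.lookup b j = c" using j ji unfolding f1_def lookup_e by simp
  define f2 where "f2 = Poly_Mapping.lookup (Poly_Mapping.single j 1 + b)"
  have f2i: "f2 i = c" and f2j: "f2 j = Suc c"
    using ji bj unfolding f2_def c_def lookup_e by auto
  have oth: "f2 x = f1 x" if "x \<noteq> i" "x \<noteq> j" for x
    using that unfolding f1_def f2_def lookup_e by simp
  have iK: "i \<in> K" using i(1) K_def by simp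
  note sw = swap_lemma[OF finK inj1 iK j(1) ji[symmetric] f1i j(2) f2i f2j oth]
  have kK2: "Poly_Mapping.keys (Poly_Mapping.single j 1 + b) = K"
    using j(1) unfolding keys_e K_def by blast
  have bnd2: "f2 x \<le> d + 1" for x
  proof (cases "x = i \<or> x = j")
    case True
    then show ?thesis using f2i f2j f1i bnd1[of i] by auto
  next
    case False
    then show ?thesis using oth bnd1 by auto
  qed
  have good2: "good d (Poly_Mapping.single j 1 + b)"
    unfolding good_def using sw(1) kK2 bnd2 unfolding f2_def by simp
  have w2: "wt z d (Poly_Mapping.single j 1 + b) = - wt z d (Poly_Mapping.single i 1 + b)"
  proof -
    have "sg (Poly_Mapping.single j 1 + b) = - (sg (Poly_Mapping.single i 1 + b) :: 'k)"
      unfolding sg_def kK kK2 using sw(2) unfolding f1_def f2_def by simp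
    then show ?thesis unfolding wt_def using good1 good2 kK kK2 by simp
  qed
  have w0: "wt z d (Poly_Mapping.single x 1 + b) = 0" if "x \<in> K - {i, j}" for x
  proof -
    have "Poly_Mapping.lookup (Poly_Mapping.single x 1 + b) i = Poly_Mapping.lookup (Poly_Mapping.single x 1 + b) j"
      using that bj unfolding lookup_e c_def by auto
    moreover have "Poly_Mapping.keys (Poly_Mapping.single x 1 + b) = K"
      using that unfolding keys_e K_def by blast
    ultimately have "\<not> good d (Poly_Mapping.single x 1 + b)"
      unfolding good_def using iK j(1) ji by (metis inj_onD)
    then show ?thesis unfolding wt_def by simp
  qed
  have "(\<Sum>x\<in>K. wt z d (Poly_Mapping.single x 1 + b)) = (\<Sum>x\<in>{i, j}. wt z d (Poly_Mapping.single x 1 + b))"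
    using finK iK j(1) w0 by (intro sum.mono_neutral_right) auto
  also have "\<dots> = 0" using ji w2 by simp
  finally show ?thesis unfolding K_def .
qed



lemma part2:
  fixes b :: "nat \<Rightarrow>\<^sub>0 nat" and z :: "nat set \<Rightarrow> 'k::field"
  assumes chain: "is_chain \<Delta> d z" and cyc: "\<forall>\<tau>. boundary n \<Delta> z \<tau> = 0"
  shows "(\<Sum>i\<in>{1..n} - Poly_Mapping.keys b. wt z d (Poly_Mapping.single i 1 + b)) = 0"
proof -
  define K where "K = Poly_Mapping.keys b"
  define f where "f = Poly_Mapping.lookup b"
  have fK: "f x \<noteq> 0 \<longleftrightarrow> x \<in> K" for x unfolding f_def K_def by (simp add: in_keys_iff)
  have lk: "Poly_Mapping.lookup (Poly_Mapping.single i 1 + b) x = (if x = i then Suc (f x) else f x)" for i x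
    unfolding f_def lookup_e by simp
  have kk: "Poly_Mapping.keys (Poly_Mapping.single i 1 + b) = insert i K" for i
    unfolding K_def keys_e by simp
  show ?thesis
  proof (cases "inj_on f K \<and> (\<forall>x. f x \<le> d + 1) \<and> (\<forall>x. f x \<noteq> 1)")
    case False
    have "wt z d (Poly_Mapping.single i 1 + b) = 0" if "i \<in> {1..n} - K" for i
    proof -
      have iK: "i \<notin> K" using that by simp
      then have fi: "f i = 0" using fK by blast
      define f' where "f' = Poly_Mapping.lookup (Poly_Mapping.single i 1 + b)"
      have f'i: "f' i = 1" unfolding f'_def lk using fi by simp
      have f'x: "f' x = f x" if "x \<noteq> i" for x unfolding f'_def lk using that by simp
      have "\<not> good d (Poly_Mapping.single i 1 + b)"
      proof
        assume g: "good d (Poly_Mapping.single i 1 + b)"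
        then have inj': "inj_on f' (insert i K)" and bnd': "\<And>x. f' x \<le> d + 1"
          unfolding good_def f'_def kk by auto
        have "inj_on f K"
        proof (rule inj_onI)
          fix x y assume "x \<in> K" "y \<in> K" "f x = f y"
          then show "x = y" using inj' iK f'x inj_onD[OF inj'] by (metis insertCI)
        qed
        moreover have "\<forall>x. f x \<le> d + 1"
        proof
          fix x show "f x \<le> d + 1" using bnd'[of x] f'x[of x] fi by (cases "x = i") auto
        qed
        moreover have "\<forall>x. f x \<noteq> 1"
        proof (intro allI notI)
          fix x assume fx: "f x = 1"
          then have "x \<in> K" using fK[of x] by simp
          then have "x \<noteq> i" using iK by auto
          then have "f' x = f' i" using fx f'x f'i by simp
          then show False using inj_onD[OF inj'] \<open>x \<in> K\<close> \<open>x \<noteq> i\<close> by blast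
        qed
        ultimately show False using False by blast
      qed
      then show ?thesis unfolding wt_def by simp
    qed
    then show ?thesis unfolding K_def by simp
  next
    case True
    then have injf: "inj_on f K" and bndf: "\<And>x. f x \<le> d + 1" and n1: "\<And>x. f x \<noteq> 1" by auto
    have ge2: "f x \<ge> 2" if "x \<in> K" for x using fK[of x] n1[of x] that by auto
    have trm: "wt z d (Poly_Mapping.single i 1 + b) =
        sg b * (if insert i K \<in> \<Delta> then (-1) ^ card {u \<in> K. u < i} * z (insert i K) else 0)"
      if iK: "i \<notin> K" for i
    proof -
      define f' where "f' = Poly_Mapping.lookup (Poly_Mapping.single i 1 + b)"
      have fi: "f i = 0" using fK iK by blast
      have f'i: "f' i = 1" unfolding f'_def lk using fi by simp
      have f'x: "f' x = f x" if "x \<noteq> i" for x unfolding f'_def lk using that by simp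
      have f'K: "x \<in> K \<Longrightarrow> f' x = f x" for x using f'x iK by metis
      have injK: "inj_on f' K" using injf inj_on_cong f'K by blast
      have "inj_on f' (insert i K)"
      proof -
        have "f' i \<notin> f' ` (K - {i})"
        proof
          assume "f' i \<in> f' ` (K - {i})"
          then obtain x where "x \<in> K" "f' i = f' x" by blast
          then have "f x = 1" using f'i f'K by simp
          then show False using n1 by blast
        qed
        then show ?thesis unfolding inj_on_insert using injK by blast
      qed
      moreover have "f' x \<le> d + 1" for x using bndf[of x] f'i f'x[of x] by (cases "x = i") auto
      ultimately have good: "good d (Poly_Mapping.single i 1 + b)"
        unfolding good_def f'_def kk by simp
      have inv: "invs (insert i K) f' = invs K f \<union> (\<lambda>u. (u, i)) ` {u \<in> K. u < i}"
      proof (intro set_eqI iffI)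
        fix x assume "x \<in> invs (insert i K) f'"
        then obtain u v where x: "x = (u, v)" "u \<in> insert i K" "v \<in> insert i K" "u < v" "f' v < f' u"
          unfolding invs_def by blast
        show "x \<in> invs K f \<union> (\<lambda>u. (u, i)) ` {u \<in> K. u < i}"
        proof (cases "u = i")
          case True
          then have "v \<in> K" "v \<noteq> i" using x by auto
          then show ?thesis using x True f'i f'K ge2[of v] by auto
        next
          case False
          then have uK: "u \<in> K" using x by auto
          show ?thesis
          proof (cases "v = i")
            case True
            then show ?thesis using x uK by auto
          next
            case False
            then show ?thesis using x uK f'K unfolding invs_def by auto
          qed
        qed
      next
        fix x assume "x \<in> invs K f \<union> (\<lambda>u. (u, i)) ` {u \<in> K. u < i}"
        then show "x \<in> invs (insert i K) f'"
        proof
          assume "x \<in> invs K f"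
          then show ?thesis unfolding invs_def using f'K by auto
        next
          assume "x \<in> (\<lambda>u. (u, i)) ` {u \<in> K. u < i}"
          then obtain u where "x = (u, i)" "u \<in> K" "u < i" by blast
          then show ?thesis unfolding invs_def using f'i f'K ge2[of u] by auto
        qed
      qed
      have finK: "finite K" unfolding K_def by simp
      have fininv: "finite (invs K f)"
        by (rule finite_subset[of _ "K \<times> K"]) (auto simp: invs_def finK)
      have disj: "invs K f \<inter> (\<lambda>u. (u, i)) ` {u \<in> K. u < i} = {}"
        using iK unfolding invs_def by auto
      have "card (invs (insert i K) f') = card (invs K f) + card {u \<in> K. u < i}"
        unfolding inv using fininv finK disj
        by (subst card_Un_disjoint) (auto simp: card_image inj_on_def)
      then have sgi: "sg (Poly_Mapping.single i 1 + b) = (sg b :: 'k) * (-1) ^ card {u \<in> K. u < i}"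
        unfolding sg_def kk f'_def[symmetric] K_def[symmetric] f_def[symmetric] by (simp add: power_add)
      show ?thesis
      proof (cases "insert i K \<in> \<Delta>")
        case True
        then show ?thesis unfolding wt_def using good sgi kk by simp
      next
        case False
        then have "z (insert i K) = 0" using chain_nz[OF chain] by blast
        then show ?thesis unfolding wt_def using kk False by simp
      qed
    qed
    have "(\<Sum>i\<in>{1..n} - K. wt z d (Poly_Mapping.single i 1 + b)) =
        (\<Sum>i\<in>{1..n} - K. sg b * (if insert i K \<in> \<Delta> then (-1) ^ card {u \<in> K. u < i} * z (insert i K) else 0))"
    proof (rule sum.cong)
      fix x assume "x \<in> {1..n} - K"
      then show "wt z d (Poly_Mapping.single x 1 + b) =
        sg b * (if insert x K \<in> \<Delta> then (-1) ^ card {u \<in> K. u < x} * z (insert x K) else 0)"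
        using trm[of x] by blast
    qed simp
    also have "\<dots> = sg b * boundary n \<Delta> z K"
      unfolding boundary_def by (simp add: sum_distrib_left)
    also have "\<dots> = 0" using cyc by simp
    finally show ?thesis unfolding K_def .
  qed
qed



lemma core:
  fixes b :: "nat \<Rightarrow>\<^sub>0 nat" and z :: "nat set \<Rightarrow> 'k::field"
  assumes sc: "simplicial_complex n \<Delta>" and chain: "is_chain \<Delta> d z" and cyc: "\<forall>\<tau>. boundary n \<Delta> z \<tau> = 0"
  shows "(\<Sum>i\<in>{1..n}. wt z d (Poly_Mapping.single i 1 + b)) = 0"
proof -
  define K where "K = Poly_Mapping.keys b"
  have s1: "(\<Sum>i\<in>{1..n} \<inter> K. wt z d (Poly_Mapping.single i 1 + b)) = 0"
  proof (cases "K \<subseteq> {1..n}")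
    case True
    then have "{1..n} \<inter> K = K" by blast
    then show ?thesis using part1[OF chain, of b] K_def by simp
  next
    case False
    then have "K \<notin> \<Delta>" using sc unfolding simplicial_complex_def by blast
    then have zK: "z K = 0" using chain_nz[OF chain] by blast
    have "wt z d (Poly_Mapping.single i 1 + b) = 0" if "i \<in> {1..n} \<inter> K" for i
    proof -
      have "Poly_Mapping.keys (Poly_Mapping.single i 1 + b) = K"
        using that unfolding keys_e K_def by blast
      then show ?thesis unfolding wt_def using zK by simp
    qed
    then show ?thesis by simp
  qed
  have "(\<Sum>i\<in>{1..n}. wt z d (Poly_Mapping.single i 1 + b)) =
     (\<Sum>i\<in>{1..n} \<inter> K. wt z d (Poly_Mapping.single i 1 + b)) + (\<Sum>i\<in>{1..n} - K. wt z d (Poly_Mapping.single i 1 + b))"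
    by (rule sum.Int_Diff) simp
  also have "\<dots> = 0" using s1 part2[OF chain cyc, of b] K_def by simp
  finally show ?thesis .
qed

lemma phi_Lg:
  fixes z :: "nat set \<Rightarrow> 'k::field"
  assumes sc: "simplicial_complex n \<Delta>" and chain: "is_chain \<Delta> d z" and cyc: "\<forall>\<tau>. boundary n \<Delta> z \<tau> = 0"
  shows "phi z d ((\<Sum>i\<in>{1..n}. var i) * g) = 0"
proof -
  have one: "phi z d ((\<Sum>i\<in>{1..n}. var i) * Poly_Mapping.single b c) = 0" for b c
  proof -
    have "(\<Sum>i\<in>{1..n}. var i) * Poly_Mapping.single b c = (\<Sum>i\<in>{1..n}. Poly_Mapping.single (Poly_Mapping.single i 1 + b) (c::'k))"
      by (simp add: sum_distrib_right var_def mult_single)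
    then have "phi z d ((\<Sum>i\<in>{1..n}. var i) * Poly_Mapping.single b c) = (\<Sum>i\<in>{1..n}. c * wt z d (Poly_Mapping.single i 1 + b))"
      by (simp add: phi_sum phi_single)
    also have "\<dots> = c * (\<Sum>i\<in>{1..n}. wt z d (Poly_Mapping.single i 1 + b))"
      by (simp add: sum_distrib_left)
    also have "\<dots> = 0" using core[OF sc chain cyc] by simp
    finally show ?thesis .
  qed
  have "(\<Sum>i\<in>{1..n}. var i) * g = (\<Sum>i\<in>{1..n}. var i) * (\<Sum>b\<in>Poly_Mapping.keys g. Poly_Mapping.single b (Poly_Mapping.lookup g b))"
    by (rule arg_cong[where f="\<lambda>x. (\<Sum>i\<in>{1..n}. var i) * x"], rule poly_expand)
  also have "\<dots> = (\<Sum>b\<in>Poly_Mapping.keys g. (\<Sum>i\<in>{1..n}. var i) * Poly_Mapping.single b (Poly_Mapping.lookup g b))"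
    by (simp add: sum_distrib_left)
  finally show ?thesis using one by (simp add: phi_sum)
qed

lemma sum_1_to: "(\<Sum>y\<in>{1..k}. y) = k * (k + 1) div (2::nat)"
  using gauss_sum_from_Suc_0[of k, where 'a = nat] by simp

theorem proposition5p9:
  fixes n d :: nat and \<Delta> :: "nat set set"
  assumes "simplicial_complex n \<Delta>"
    and "complex_dim \<Delta> d"
    and "reduced_homology_nonzero TYPE('k::field) n \<Delta> d"
  defines "L \<equiv> (\<Sum>i\<in>{1..n}. var i) :: 'k mpoly"
    and "J \<equiv> ideal_gen n (SR_ideal n \<Delta> \<union> {var i ^ (d + 2) | i. i \<in> {1..n}})"
    and "m \<equiv> (d + 2) choose 2"
  shows "\<exists>f\<in>polyring n. homogeneous m f \<and>
           (\<forall>g\<in>polyring n. homogeneous (m - 1) g \<longrightarrow> f - L * g \<notin> J)"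
proof -
  note sc = assms(1)
  obtain z :: "nat set \<Rightarrow> 'k" where ch: "is_chain \<Delta> d z" and cyc: "\<forall>\<tau>. boundary n \<Delta> z \<tau> = 0"
    and nb: "\<not> (\<exists>b :: nat set \<Rightarrow> 'k. is_chain \<Delta> (d + 1) b \<and> (\<forall>\<tau>. z \<tau> = boundary n \<Delta> b \<tau>))"
    using assms(3) unfolding reduced_homology_nonzero_def by blast
  have "\<exists>\<sigma>. z \<sigma> \<noteq> 0"
  proof (rule ccontr)
    assume "\<not> ?thesis"
    then have "\<forall>\<tau>. z \<tau> = 0" by auto
    moreover have "boundary n \<Delta> (\<lambda>_. 0 :: 'k) \<tau> = 0" for \<tau>
      unfolding boundary_def by (intro sum.neutral) simp
    ultimately have "is_chain \<Delta> (d + 1) (\<lambda>_. 0 :: 'k) \<and> (\<forall>\<tau>. z \<tau> = boundary n \<Delta> (\<lambda>_. 0) \<tau>)"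
      by (simp add: is_chain_def)
    with nb show False by blast
  qed
  then obtain \<sigma>0 where zs: "z \<sigma>0 \<noteq> 0" by blast
  then have s0: "\<sigma>0 \<in> \<Delta>" "card \<sigma>0 = d + 1" using chain_nz[OF ch] by auto
  have sub: "\<sigma>0 \<subseteq> {1..n}" using s0 sc unfolding simplicial_complex_def by blast
  then have fin: "finite \<sigma>0" using finite_subset by blast
  obtain h where bij: "bij_betw h \<sigma>0 {1..d+1}"
    using finite_same_card_bij[OF fin, of "{1..d+1}"] s0 by auto
  have hr: "h x \<in> {1..d+1}" if "x \<in> \<sigma>0" for x using bij that by (meson bij_betwE)
  define a0 :: "nat \<Rightarrow>\<^sub>0 nat" where "a0 = Abs_poly_mapping (\<lambda>x. if x \<in> \<sigma>0 then h x else 0)"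
  have "finite {x. (if x \<in> \<sigma>0 then h x else 0) \<noteq> 0}"
    by (rule finite_subset[OF _ fin]) auto
  then have la: "Poly_Mapping.lookup a0 = (\<lambda>x. if x \<in> \<sigma>0 then h x else 0)"
    unfolding a0_def by simp
  have ka: "Poly_Mapping.keys a0 = \<sigma>0"
  proof (intro set_eqI iffI)
    fix x assume "x \<in> Poly_Mapping.keys a0"
    then show "x \<in> \<sigma>0" by (simp add: in_keys_iff la split: if_splits)
  next
    fix x assume "x \<in> \<sigma>0"
    then show "x \<in> Poly_Mapping.keys a0" using hr[of x] by (simp add: in_keys_iff la)
  qed
  have "inj_on (Poly_Mapping.lookup a0) \<sigma>0"
    using bij_betw_imp_inj_on[OF bij] la by (simp add: inj_on_def)
  moreover have "\<forall>i. Poly_Mapping.lookup a0 i \<le> d + 1" using hr la by auto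
  ultimately have good0: "good d a0" unfolding good_def ka by simp
  have w0: "wt z d a0 \<noteq> 0" unfolding wt_def sg_def using good0 ka zs by simp
  have "mdeg a0 = (\<Sum>x\<in>\<sigma>0. h x)" unfolding mdeg_def ka la by simp
  also have "\<dots> = (\<Sum>y\<in>{1..d+1}. y)" using sum.reindex_bij_betw[OF bij, of "\<lambda>y. y"] by simp
  also have "\<dots> = m" unfolding sum_1_to m_def choose_two by (simp add: mult.commute)
  finally have md: "mdeg a0 = m" .
  define f where "f = Poly_Mapping.single a0 (1::'k)"
  show ?thesis
  proof (intro bexI conjI ballI impI)
    show "f \<in> polyring n" unfolding polyring_def f_def using ka sub by simp
    show "homogeneous m f" unfolding homogeneous_def f_def using md by simp
    fix g :: "'k mpoly"
    show "f - L * g \<notin> J"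
    proof
      assume "f - L * g \<in> J"
      then have "allbad \<Delta> d (f - L * g)" unfolding J_def by (rule allbad_J[OF sc])
      then have "phi z d (f - L * g) = 0" by (rule phi_allbad[OF ch])
      moreover have "phi z d (f - L * g) = wt z d a0"
        unfolding phi_diff L_def phi_Lg[OF sc ch cyc] f_def phi_single by simp
      ultimately show False using w0 by simp
    qed
  qed
qed


end
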